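(* Let $G$ be a finite abstract simplicial complex with connection matrix $L$ and $g=L^{-1}$. Then for every $x\in G$, $g(x,x)=1-\chi(S(x))$.
   Context: A finite abstract simplicial complex $G$ is a finite set of non-empty finite sets closed under taking non-empty subsets. The connection matrix $L$ has $L(x,y)=1$ if $x\cap y\neq\emptyset$ and $0$ otherwise. The Barycentric refinement $G_1$ is the graph with vertex set $G$ where $x\neq y$ are adjacent iff $x\subset y$ or $y\subset x$. $S(x)$ is the set of $y\in G$ with $y\subsetneq x$ or $x\subsetneq y$, and $\chi(S(x))$ is the Euler characteristic $\sum_K(-1)^{|K|-1}$ over non-empty cliques $K$ of the subgraph of $G_1$ induced on $S(x)$. *)

theory Defs
  imports Complex_Main
begin

definition simplicial_complex :: "'a set set \<Rightarrow> bool" where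
  "simplicial_complex G \<longleftrightarrow> finite G \<and>
     (\<forall>x\<in>G. finite x \<and> x \<noteq> {}) \<and>
     (\<forall>x\<in>G. \<forall>y. y \<subseteq> x \<and> y \<noteq> {} \<longrightarrow> y \<in> G)"

definition conn_matrix :: "'a set \<Rightarrow> 'a set \<Rightarrow> real" where
  "conn_matrix x y = (if x \<inter> y \<noteq> {} then 1 else 0)"

definition is_inverse_on :: "'a set set \<Rightarrow> ('a set \<Rightarrow> 'a set \<Rightarrow> real) \<Rightarrow> ('a set \<Rightarrow> 'a set \<Rightarrow> real) \<Rightarrow> bool" where
  "is_inverse_on G M g \<longleftrightarrow>
     (\<forall>x\<in>G. \<forall>z\<in>G. (\<Sum>y\<in>G. M x y * g y z) = (if x = z then 1 else 0)) \<and>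
     (\<forall>x\<in>G. \<forall>z\<in>G. (\<Sum>y\<in>G. g x y * M y z) = (if x = z then 1 else 0))"

text \<open>Adjacency in the Barycentric refinement G_1.\<close>
definition bary_adj :: "'a set \<Rightarrow> 'a set \<Rightarrow> bool" where
  "bary_adj x y \<longleftrightarrow> x \<noteq> y \<and> (x \<subseteq> y \<or> y \<subseteq> x)"

definition unit_sphere :: "'a set set \<Rightarrow> 'a set \<Rightarrow> 'a set set" where
  "unit_sphere G x = {y \<in> G. y \<subset> x \<or> x \<subset> y}"

text \<open>Non-empty cliques of the subgraph of G_1 induced on the vertex set V.\<close>
definition bary_cliques :: "'a set set \<Rightarrow> 'a set set set" where
  "bary_cliques V = {K. K \<subseteq> V \<and> K \<noteq> {} \<and> (\<forall>a\<in>K. \<forall>b\<in>K. a \<noteq> b \<longrightarrow> bary_adj a b)}"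

definition euler_char :: "'a set set \<Rightarrow> int" where
  "euler_char V = (\<Sum>K\<in>bary_cliques V. (-1) ^ (card K - 1))"

end

theory Submission
  imports Defs
begin

definition chs :: "'a set set \<Rightarrow> 'a set set set" where
  "chs S = {K. K \<subseteq> S \<and> (\<forall>a\<in>K. \<forall>b\<in>K. a \<subseteq> b \<or> b \<subseteq> a)}"

definition Phi :: "'a set set \<Rightarrow> real" where
  "Phi S = (\<Sum>K\<in>chs S. (-1)^card K)"

lemma finite_chs: "finite S \<Longrightarrow> finite (chs S)"
  by (rule finite_subset[of _ "Pow S"]) (auto simp: chs_def)

lemma alt_pow: "finite B \<Longrightarrow> (\<Sum>T\<in>Pow B. (-1::real)^card T) = (if B = {} then 1 else 0)"
proof (induction B rule: finite_induct)
  case empty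
  show ?case by simp
next
  case (insert b B)
  have disj: "Pow B \<inter> insert b ` Pow B = {}" using insert.hyps(2) by auto
  have inj: "inj_on (insert b) (Pow B)" using insert.hyps(2) unfolding inj_on_def
    by (metis PowD Diff_insert_absorb subsetD)
  have c: "\<forall>T\<in>Pow B. card (insert b T) = Suc (card T)"
    using insert.hyps by (metis PowD card_insert_disjoint finite_subset subsetD)
  have "(\<Sum>T\<in>insert b ` Pow B. (-1::real)^card T) = (\<Sum>T\<in>Pow B. (-1)^card (insert b T))"
    by (simp add: sum.reindex[OF inj])
  also have "\<dots> = (\<Sum>T\<in>Pow B. - ((-1)^card T))"
    by (rule sum.cong) (use c in auto)
  also have "\<dots> = - (\<Sum>T\<in>Pow B. (-1)^card T)" by (simp add: sum_negf)
  finally have e: "(\<Sum>T\<in>insert b ` Pow B. (-1::real)^card T) = - (\<Sum>T\<in>Pow B. (-1)^card T)" .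
  have "(\<Sum>T\<in>Pow (insert b B). (-1::real)^card T)
      = (\<Sum>T\<in>Pow B. (-1::real)^card T) + (\<Sum>T\<in>insert b ` Pow B. (-1::real)^card T)"
    unfolding Pow_insert using insert.hyps(1) disj by (simp add: sum.union_disjoint)
  then show ?case using e by simp
qed

lemma alt_interval:
  assumes "finite m" "a \<subseteq> m"
  shows "(\<Sum>s\<in>{s. a \<subseteq> s \<and> s \<subseteq> m}. (-1::real)^card s) = (if a = m then (-1)^card a else 0)"
proof -
  have eq: "{s. a \<subseteq> s \<and> s \<subseteq> m} = (\<lambda>T. a \<union> T) ` Pow (m - a)"
  proof (intro equalityI subsetI)
    fix s assume "s \<in> {s. a \<subseteq> s \<and> s \<subseteq> m}"
    then have "s = a \<union> (s - a)" "s - a \<in> Pow (m - a)" by auto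
    then show "s \<in> (\<lambda>T. a \<union> T) ` Pow (m - a)" by blast
  next
    fix s assume "s \<in> (\<lambda>T. a \<union> T) ` Pow (m - a)"
    then show "s \<in> {s. a \<subseteq> s \<and> s \<subseteq> m}" using assms by auto
  qed
  have inj: "inj_on (\<lambda>T. a \<union> T) (Pow (m - a))"
    unfolding inj_on_def by blast
  have fa: "finite a" using assms finite_subset by blast
  have c: "\<forall>T\<in>Pow (m - a). card (a \<union> T) = card a + card T"
  proof
    fix T assume "T \<in> Pow (m - a)"
    then have "finite T" "a \<inter> T = {}" using assms by (auto intro: finite_subset[of T m])
    then show "card (a \<union> T) = card a + card T" using fa by (simp add: card_Un_disjoint)
  qed
  have "(\<Sum>s\<in>{s. a \<subseteq> s \<and> s \<subseteq> m}. (-1::real)^card s) = (\<Sum>T\<in>Pow (m - a). (-1)^card (a \<union> T))"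
    unfolding eq by (simp add: sum.reindex[OF inj])
  also have "\<dots> = (\<Sum>T\<in>Pow (m - a). (-1)^card a * (-1)^card T)"
    by (rule sum.cong) (use c in \<open>auto simp: power_add\<close>)
  also have "\<dots> = (-1)^card a * (\<Sum>T\<in>Pow (m - a). (-1)^card T)"
    by (simp add: sum_distrib_left)
  also have "\<dots> = (if a = m then (-1)^card a else 0)"
    using alt_pow[of "m - a"] assms by auto
  finally show ?thesis .
qed


lemma conv_chain:
  assumes "finite P" "finite a" "\<forall>z\<in>P. a \<subset> z \<and> finite z"
    "\<forall>z\<in>P. \<forall>w. a \<subset> w \<and> w \<subseteq> z \<longrightarrow> w \<in> P"
  shows "Phi P = 1 + (-1)^card a * (\<Sum>z\<in>P. (-1::real)^card z)"
  using assms
proof (induction "card P" arbitrary: P rule: less_induct)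
  case less
  show ?case
  proof (cases "P = {}")
    case True
    have "chs P = {{}}" using True by (auto simp: chs_def)
    then show ?thesis using True by (simp add: Phi_def)
  next
    case False
    have "Max (card ` P) \<in> card ` P" using False less.prems(1) by (simp add: Max_in)
    then obtain m where mP: "m \<in> P" and mmax: "card m = Max (card ` P)" by auto
    have maxm: "\<forall>z\<in>P. m \<subseteq> z \<longrightarrow> z = m"
    proof (intro ballI impI)
      fix z assume z: "z \<in> P" "m \<subseteq> z"
      have "card z \<le> card m" using mmax z less.prems(1) by simp
      moreover have "card m \<le> card z" using z less.prems(3) by (simp add: card_mono)
      ultimately show "z = m" using z less.prems(3) card_subset_eq[of z m] by simp
    qed
    define D where "D = {s\<in>P. s \<subset> m}"
    have finD: "finite D" using less.prems(1) by (simp add: D_def)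
    have mD: "m \<notin> D" by (simp add: D_def)
    have split: "chs P = chs (P - {m}) \<union> insert m ` chs D"
    proof (intro equalityI subsetI)
      fix K assume K: "K \<in> chs P"
      show "K \<in> chs (P - {m}) \<union> insert m ` chs D"
      proof (cases "m \<in> K")
        case False
        then show ?thesis using K by (auto simp: chs_def)
      next
        case True
        have "K - {m} \<subseteq> D"
        proof
          fix s assume s: "s \<in> K - {m}"
          then have "s \<in> P" "s \<subseteq> m \<or> m \<subseteq> s" using K True by (auto simp: chs_def)
          then show "s \<in> D" using maxm s by (auto simp: D_def)
        qed
        then have "K - {m} \<in> chs D" using K by (auto simp: chs_def)
        moreover have "K = insert m (K - {m})" using True by auto
        ultimately show ?thesis by blast
      qed
    next
      fix K assume "K \<in> chs (P - {m}) \<union> insert m ` chs D"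
      then show "K \<in> chs P" using mP by (auto simp: chs_def D_def)
    qed
    have disj: "chs (P - {m}) \<inter> insert m ` chs D = {}" by (auto simp: chs_def)
    have inj: "inj_on (insert m) (chs D)"
    proof (rule inj_onI)
      fix K1 K2 assume h: "K1 \<in> chs D" "K2 \<in> chs D" "insert m K1 = insert m K2"
      then have "m \<notin> K1" "m \<notin> K2" using mD by (auto simp: chs_def)
      then show "K1 = K2" using h(3) by (metis Diff_insert_absorb)
    qed
    have cardins: "\<forall>K\<in>chs D. card (insert m K) = Suc (card K)"
    proof
      fix K assume "K \<in> chs D"
      then have "K \<subseteq> D" by (simp add: chs_def)
      then have "finite K" "m \<notin> K" using finD mD by (auto intro: finite_subset)
      then show "card (insert m K) = Suc (card K)" by simp
    qed
    have PhiP: "Phi P = Phi (P - {m}) - Phi D"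
    proof -
      have "Phi P = Phi (P - {m}) + (\<Sum>K\<in>insert m ` chs D. (-1)^card K)"
        unfolding Phi_def split
        by (rule sum.union_disjoint) (simp_all add: disj finite_chs finD less.prems(1))
      also have "(\<Sum>K\<in>insert m ` chs D. (-1::real)^card K) = (\<Sum>K\<in>chs D. (-1)^card (insert m K))"
        by (simp add: sum.reindex[OF inj])
      also have "\<dots> = (\<Sum>K\<in>chs D. - ((-1)^card K))"
        by (rule sum.cong) (use cardins in auto)
      also have "\<dots> = - Phi D" by (simp add: sum_negf Phi_def)
      finally show ?thesis by simp
    qed
    have cP: "card (P - {m}) < card P" using mP less.prems(1) by (meson card_Diff1_less)
    have IH1: "Phi (P - {m}) = 1 + (-1)^card a * (\<Sum>z\<in>P - {m}. (-1::real)^card z)"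
    proof (rule less.hyps[OF cP])
      show "finite (P - {m})" using less.prems(1) by simp
      show "finite a" by fact
      show "\<forall>z\<in>P - {m}. a \<subset> z \<and> finite z" using less.prems(3) by auto
      show "\<forall>z\<in>P - {m}. \<forall>w. a \<subset> w \<and> w \<subseteq> z \<longrightarrow> w \<in> P - {m}"
        using less.prems(4) maxm by blast
    qed
    have cD: "card D < card P"
    proof -
      have "D \<subseteq> P - {m}" by (auto simp: D_def)
      then have "card D \<le> card (P - {m})" using less.prems(1) by (simp add: card_mono)
      then show ?thesis using cP by simp
    qed
    have IH2: "Phi D = 1 + (-1)^card a * (\<Sum>z\<in>D. (-1::real)^card z)"
    proof (rule less.hyps[OF cD])
      show "finite D" by fact
      show "finite a" by fact
      show "\<forall>z\<in>D. a \<subset> z \<and> finite z" using less.prems(3) by (auto simp: D_def)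
      show "\<forall>z\<in>D. \<forall>w. a \<subset> w \<and> w \<subseteq> z \<longrightarrow> w \<in> D"
        using less.prems(4) by (auto simp: D_def)
    qed
    have am: "a \<subset> m" "finite m" using less.prems(3) mP by auto
    have Deq: "D = {s. a \<subseteq> s \<and> s \<subseteq> m} - {a, m}"
    proof (intro equalityI subsetI)
      fix s assume "s \<in> D"
      then have "s \<in> P" "s \<subset> m" by (auto simp: D_def)
      moreover have "a \<subset> s" using calculation(1) less.prems(3) by blast
      ultimately show "s \<in> {s. a \<subseteq> s \<and> s \<subseteq> m} - {a, m}" by blast
    next
      fix s assume s: "s \<in> {s. a \<subseteq> s \<and> s \<subseteq> m} - {a, m}"
      then have "a \<subset> s" "s \<subset> m" by auto
      moreover have "s \<in> P" using less.prems(4) mP calculation by blast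
      ultimately show "s \<in> D" by (simp add: D_def)
    qed
    have finI: "finite {s. a \<subseteq> s \<and> s \<subseteq> m}"
      by (rule finite_subset[of _ "Pow m"]) (use am in auto)
    have "(\<Sum>z\<in>D. (-1::real)^card z) = (\<Sum>s\<in>{s. a \<subseteq> s \<and> s \<subseteq> m}. (-1::real)^card s) - (\<Sum>s\<in>{a,m}. (-1::real)^card s)"
      unfolding Deq using finI am by (subst sum_diff) auto
    also have "\<dots> = - ((-1)^card a) - (-1)^card m"
      using alt_interval[of m a] am by auto
    finally have SD: "(\<Sum>z\<in>D. (-1::real)^card z) = - ((-1)^card a) - (-1)^card m" .
    have SP: "(\<Sum>z\<in>P. (-1::real)^card z) = (-1)^card m + (\<Sum>z\<in>P - {m}. (-1::real)^card z)"
      using mP less.prems(1) by (simp add: sum.remove)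
    have cc: "(-1::real)^card a * (-1)^card a = 1" by (simp flip: power_add)
    show ?thesis unfolding PhiP IH1 IH2 SD SP
      using cc by (simp add: algebra_simps)
  qed
qed

lemma Phi_union:
  assumes "finite L" "finite U" "L \<inter> U = {}" "\<forall>l\<in>L. \<forall>u\<in>U. l \<subseteq> u"
  shows "Phi (L \<union> U) = Phi L * Phi U"
proof -
  have eq: "chs (L \<union> U) = (\<lambda>(A,B). A \<union> B) ` (chs L \<times> chs U)"
  proof (intro equalityI subsetI)
    fix K assume K: "K \<in> chs (L \<union> U)"
    then have "K \<inter> L \<in> chs L" "K \<inter> U \<in> chs U" "K = (K \<inter> L) \<union> (K \<inter> U)"
      by (auto simp: chs_def)
    then show "K \<in> (\<lambda>(A,B). A \<union> B) ` (chs L \<times> chs U)"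
      by (intro image_eqI[where x="(K \<inter> L, K \<inter> U)"]) auto
  next
    fix K assume "K \<in> (\<lambda>(A,B). A \<union> B) ` (chs L \<times> chs U)"
    then obtain A B where K: "K = A \<union> B" and AB: "A \<in> chs L" "B \<in> chs U" by auto
    have sub: "A \<subseteq> L" "B \<subseteq> U" using AB by (auto simp: chs_def)
    have cA: "\<forall>p\<in>A. \<forall>q\<in>A. p \<subseteq> q \<or> q \<subseteq> p" and cB: "\<forall>p\<in>B. \<forall>q\<in>B. p \<subseteq> q \<or> q \<subseteq> p"
      using AB by (auto simp: chs_def)
    have "\<forall>p\<in>K. \<forall>q\<in>K. p \<subseteq> q \<or> q \<subseteq> p"
    proof (intro ballI)
      fix p q assume pq: "p \<in> K" "q \<in> K"
      show "p \<subseteq> q \<or> q \<subseteq> p"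
      proof (cases "p \<in> A")
        case pA: True
        show ?thesis
        proof (cases "q \<in> A")
          case True then show ?thesis using pA cA by blast
        next
          case False then have "q \<in> B" using pq K by blast
          then show ?thesis using pA sub assms(4) by blast
        qed
      next
        case pA: False
        then have pB: "p \<in> B" using pq K by blast
        show ?thesis
        proof (cases "q \<in> A")
          case True then show ?thesis using pB sub assms(4) by blast
        next
          case False then have "q \<in> B" using pq K by blast
          then show ?thesis using pB cB by blast
        qed
      qed
    qed
    moreover have "K \<subseteq> L \<union> U" using K sub by blast
    ultimately show "K \<in> chs (L \<union> U)" unfolding chs_def by blast
  qed
  have inj: "inj_on (\<lambda>(A,B). A \<union> B) (chs L \<times> chs U)"
  proof (rule inj_onI, clarify)
    fix A B A' B' assume h: "A \<in> chs L" "B \<in> chs U" "A' \<in> chs L" "B' \<in> chs U" "A \<union> B = A' \<union> B'"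
    have e: "A = (A \<union> B) \<inter> L" "A' = (A' \<union> B') \<inter> L" "B = (A \<union> B) \<inter> U" "B' = (A' \<union> B') \<inter> U"
      using h assms(3) by (auto simp: chs_def)
    have "A = A'" using e(1,2) h(5) by simp
    moreover have "B = B'" using e(3,4) h(5) by simp
    ultimately show "A = A' \<and> B = B'" by simp
  qed
  have c: "\<forall>p\<in>chs L \<times> chs U. card (fst p \<union> snd p) = card (fst p) + card (snd p)"
  proof
    fix p assume "p \<in> chs L \<times> chs U"
    then have "fst p \<subseteq> L" "snd p \<subseteq> U" by (auto simp: chs_def)
    moreover have "finite (fst p)" "finite (snd p)" using calculation assms by (auto intro: finite_subset)
    moreover have "fst p \<inter> snd p = {}" using calculation assms(3) by blast
    ultimately show "card (fst p \<union> snd p) = card (fst p) + card (snd p)"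
      by (simp add: card_Un_disjoint)
  qed
  have "Phi (L \<union> U) = (\<Sum>p\<in>chs L \<times> chs U. (-1::real)^card (fst p \<union> snd p))"
    unfolding Phi_def eq sum.reindex[OF inj] by (simp add: case_prod_beta)
  also have "\<dots> = (\<Sum>p\<in>chs L \<times> chs U. (-1::real)^card (fst p) * (-1)^card (snd p))"
    by (rule sum.cong) (use c in \<open>auto simp: power_add\<close>)
  also have "\<dots> = Phi L * Phi U"
    unfolding Phi_def sum_product sum.cartesian_product by (simp add: case_prod_beta)
  finally show ?thesis .
qed


definition gK :: "'a set set \<Rightarrow> 'a set \<Rightarrow> 'a set \<Rightarrow> real" where
  "gK G x y = - ((-1)^(card x + card y) * (\<Sum>z\<in>{z\<in>G. x \<union> y \<subseteq> z}. (-1)^card z))"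

lemma inner_sum:
  assumes "finite z" "z \<noteq> {}"
  shows "(\<Sum>y\<in>{y\<in>Pow z. x \<inter> y \<noteq> {}}. (-1::real)^card y) = - (if z \<subseteq> x then 1 else 0)"
proof -
  have e: "{y\<in>Pow z. x \<inter> y \<noteq> {}} = Pow z - Pow (z - x)" by auto
  have "(\<Sum>y\<in>{y\<in>Pow z. x \<inter> y \<noteq> {}}. (-1::real)^card y)
      = (\<Sum>y\<in>Pow z. (-1::real)^card y) - (\<Sum>y\<in>Pow (z - x). (-1::real)^card y)"
    unfolding e using assms by (subst sum_diff) auto
  also have "\<dots> = - (if z \<subseteq> x then 1 else 0)"
    using alt_pow[of z] alt_pow[of "z - x"] assms by auto
  finally show ?thesis .
qed

lemma row:
  assumes sc: "simplicial_complex G" and x: "x \<in> G" and w: "w \<in> G"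
  shows "(\<Sum>y\<in>G. conn_matrix x y * gK G y w) = (if x = w then 1 else 0)"
proof -
  have fG: "finite G" using sc unfolding simplicial_complex_def by blast
  have fin: "\<forall>z\<in>G. finite z \<and> z \<noteq> {}" using sc unfolding simplicial_complex_def by blast
  have cl: "\<forall>z\<in>G. \<forall>y. y \<subseteq> z \<and> y \<noteq> {} \<longrightarrow> y \<in> G"
    using sc unfolding simplicial_complex_def by blast
  define c where "c = (-1::real)^card w"
  define A where "A = {y\<in>G. x \<inter> y \<noteq> {}}"
  have finA: "finite A" using fG by (simp add: A_def)
  have s1: "\<And>y. conn_matrix x y * gK G y w = (if x \<inter> y \<noteq> {} then
        - c * (\<Sum>z\<in>{z\<in>G. y \<union> w \<subseteq> z}. (-1)^card y * (-1)^card z) else 0)"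
  proof -
    fix y
    have "(\<Sum>z\<in>{z\<in>G. y \<union> w \<subseteq> z}. (-1::real)^card y * (-1)^card z)
        = (-1)^card y * (\<Sum>z\<in>{z\<in>G. y \<union> w \<subseteq> z}. (-1::real)^card z)"
      by (simp add: sum_distrib_left)
    moreover have "(-1::real)^(card y + card w) = (-1)^card y * c" by (simp add: power_add c_def)
    ultimately show "?thesis y"
      unfolding gK_def conn_matrix_def by (simp add: Un_commute)
  qed
  have "(\<Sum>y\<in>G. conn_matrix x y * gK G y w)
       = (\<Sum>y\<in>A. - c * (\<Sum>z\<in>{z\<in>G. y \<union> w \<subseteq> z}. (-1::real)^card y * (-1)^card z))"
    unfolding s1 A_def by (simp only: sum.inter_filter[OF fG])
  also have "\<dots> = - c * (\<Sum>y\<in>A. \<Sum>z\<in>{z\<in>G. y \<union> w \<subseteq> z}. (-1::real)^card y * (-1)^card z)"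
    by (simp add: sum_distrib_left)
  also have "(\<Sum>y\<in>A. \<Sum>z\<in>{z\<in>G. y \<union> w \<subseteq> z}. (-1::real)^card y * (-1)^card z)
      = (\<Sum>z\<in>G. \<Sum>y\<in>{y\<in>A. y \<union> w \<subseteq> z}. (-1::real)^card y * (-1)^card z)"
    by (rule sum.swap_restrict[OF finA fG])
  also have "\<dots> = (\<Sum>z\<in>G. if w \<subseteq> z \<and> z \<subseteq> x then - ((-1::real)^card z) else 0)"
  proof (rule sum.cong[OF refl])
    fix z assume z: "z \<in> G"
    show "(\<Sum>y\<in>{y\<in>A. y \<union> w \<subseteq> z}. (-1::real)^card y * (-1)^card z)
        = (if w \<subseteq> z \<and> z \<subseteq> x then - ((-1::real)^card z) else 0)"
    proof (cases "w \<subseteq> z")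
      case False
      then have "{y\<in>A. y \<union> w \<subseteq> z} = {}" by auto
      then show ?thesis using False by simp
    next
      case True
      have e: "{y\<in>A. y \<union> w \<subseteq> z} = {y\<in>Pow z. x \<inter> y \<noteq> {}}"
      proof (intro equalityI subsetI)
        fix y assume "y \<in> {y\<in>A. y \<union> w \<subseteq> z}"
        then show "y \<in> {y\<in>Pow z. x \<inter> y \<noteq> {}}" unfolding A_def by simp
      next
        fix y assume y: "y \<in> {y\<in>Pow z. x \<inter> y \<noteq> {}}"
        then have "y \<subseteq> z" "y \<noteq> {}" "x \<inter> y \<noteq> {}" by auto
        moreover have "y \<in> G" using cl z calculation by blast
        ultimately show "y \<in> {y\<in>A. y \<union> w \<subseteq> z}" unfolding A_def using True by simp
      qed
      have "(\<Sum>y\<in>{y\<in>A. y \<union> w \<subseteq> z}. (-1::real)^card y * (-1)^card z)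
          = (\<Sum>y\<in>{y\<in>Pow z. x \<inter> y \<noteq> {}}. (-1::real)^card y) * (-1)^card z"
        unfolding e by (simp add: sum_distrib_right)
      also have "\<dots> = - (if z \<subseteq> x then 1 else 0) * (-1)^card z"
        using inner_sum[of z x] z fin by simp
      finally show ?thesis using True by simp
    qed
  qed
  also have "\<dots> = - (\<Sum>z\<in>{z. w \<subseteq> z \<and> z \<subseteq> x}. (-1::real)^card z)"
  proof -
    have e: "{z\<in>G. w \<subseteq> z \<and> z \<subseteq> x} = {z. w \<subseteq> z \<and> z \<subseteq> x}"
    proof (intro equalityI subsetI)
      fix z assume "z \<in> {z\<in>G. w \<subseteq> z \<and> z \<subseteq> x}"
      then show "z \<in> {z. w \<subseteq> z \<and> z \<subseteq> x}" by simp
    next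
      fix z assume z: "z \<in> {z. w \<subseteq> z \<and> z \<subseteq> x}"
      have "w \<noteq> {}" using w fin by blast
      then have "z \<noteq> {}" "z \<subseteq> x" using z by auto
      then have "z \<in> G" using cl x by blast
      then show "z \<in> {z\<in>G. w \<subseteq> z \<and> z \<subseteq> x}" using z by simp
    qed
    have "(\<Sum>z\<in>G. if w \<subseteq> z \<and> z \<subseteq> x then - ((-1::real)^card z) else 0)
        = (\<Sum>z\<in>{z\<in>G. w \<subseteq> z \<and> z \<subseteq> x}. - ((-1::real)^card z))"
      using fG by (simp add: sum.inter_filter)
    then show ?thesis unfolding e by (simp add: sum_negf)
  qed
  finally have tot: "(\<Sum>y\<in>G. conn_matrix x y * gK G y w) = c * (\<Sum>z\<in>{z. w \<subseteq> z \<and> z \<subseteq> x}. (-1::real)^card z)"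
    by simp
  show ?thesis
  proof (cases "w \<subseteq> x")
    case True
    have "c * c = 1" unfolding c_def by (simp flip: power_add)
    then show ?thesis unfolding tot using alt_interval[of x w] True x fin
      by (auto simp: c_def)
  next
    case False
    then have E: "{z. w \<subseteq> z \<and> z \<subseteq> x} = {}" by blast
    have "x \<noteq> w" using False by blast
    then show ?thesis unfolding tot E by simp
  qed
qed


lemma gK_sym: "gK G x y = gK G y x"
  unfolding gK_def by (simp add: Un_commute add.commute)

lemma conn_sym: "conn_matrix x y = conn_matrix y x"
  unfolding conn_matrix_def by (simp add: Int_commute)

lemma inv_gK:
  assumes sc: "simplicial_complex G"
  shows "is_inverse_on G conn_matrix (gK G)"
  unfolding is_inverse_on_def
proof (intro conjI ballI)
  fix x z assume "x \<in> G" "z \<in> G"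
  then show "(\<Sum>y\<in>G. conn_matrix x y * gK G y z) = (if x = z then 1 else 0)"
    using row[OF sc] by blast
next
  fix x z assume xz: "x \<in> G" "z \<in> G"
  have "(\<Sum>y\<in>G. gK G x y * conn_matrix y z) = (\<Sum>y\<in>G. conn_matrix z y * gK G y x)"
    by (rule sum.cong[OF refl]) (simp add: gK_sym[of G x] conn_sym[of _ z])
  also have "\<dots> = (if z = x then 1 else 0)" using row[OF sc xz(2) xz(1)] .
  finally show "(\<Sum>y\<in>G. gK G x y * conn_matrix y z) = (if x = z then 1 else 0)" by auto
qed

lemma uniq_gK:
  assumes sc: "simplicial_complex G" and g: "is_inverse_on G conn_matrix g"
    and x: "x \<in> G" and z: "z \<in> G"
  shows "g x z = gK G x z"
proof -
  have fG: "finite G" using sc unfolding simplicial_complex_def by blast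
  have gl: "\<forall>x\<in>G. \<forall>z\<in>G. (\<Sum>y\<in>G. g x y * conn_matrix y z) = (if x = z then 1 else 0)"
    using g unfolding is_inverse_on_def by blast
  have "(\<Sum>y\<in>G. g x y * (if y = z then 1 else 0)) = (\<Sum>y\<in>G. if y = z then g x y else 0)"
    by (rule sum.cong[OF refl]) simp
  also have "\<dots> = g x z" using z fG by simp
  finally have "g x z = (\<Sum>y\<in>G. g x y * (if y = z then 1 else 0))" by simp
  also have "\<dots> = (\<Sum>y\<in>G. g x y * (\<Sum>u\<in>G. conn_matrix y u * gK G u z))"
    by (rule sum.cong[OF refl]) (simp add: row[OF sc _ z])
  also have "\<dots> = (\<Sum>y\<in>G. \<Sum>u\<in>G. g x y * conn_matrix y u * gK G u z)"
    by (simp add: sum_distrib_left mult.assoc)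
  also have "\<dots> = (\<Sum>u\<in>G. \<Sum>y\<in>G. g x y * conn_matrix y u * gK G u z)"
    by (rule sum.swap)
  also have "\<dots> = (\<Sum>u\<in>G. (\<Sum>y\<in>G. g x y * conn_matrix y u) * gK G u z)"
    by (simp add: sum_distrib_right)
  also have "\<dots> = (\<Sum>u\<in>G. (if x = u then 1 else 0) * gK G u z)"
    by (rule sum.cong[OF refl]) (simp add: gl x)
  also have "\<dots> = (\<Sum>u\<in>G. if x = u then gK G u z else 0)"
    by (rule sum.cong[OF refl]) simp
  also have "\<dots> = gK G x z" using x fG by simp
  finally show ?thesis .
qed

lemma euler_Phi:
  assumes "finite V"
  shows "real_of_int (euler_char V) = 1 - Phi V"
proof -
  have bc: "bary_cliques V = chs V - {{}}"
  proof (intro equalityI subsetI)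
    fix K assume "K \<in> bary_cliques V"
    then have h: "K \<subseteq> V" "K \<noteq> {}" "\<forall>a\<in>K. \<forall>b\<in>K. a \<noteq> b \<longrightarrow> bary_adj a b"
      by (simp_all add: bary_cliques_def)
    have "\<forall>a\<in>K. \<forall>b\<in>K. a \<subseteq> b \<or> b \<subseteq> a" using h(3) unfolding bary_adj_def by blast
    then show "K \<in> chs V - {{}}" using h by (simp add: chs_def)
  next
    fix K assume "K \<in> chs V - {{}}"
    then have h: "K \<subseteq> V" "K \<noteq> {}" "\<forall>a\<in>K. \<forall>b\<in>K. a \<subseteq> b \<or> b \<subseteq> a"
      by (auto simp: chs_def)
    have "\<forall>a\<in>K. \<forall>b\<in>K. a \<noteq> b \<longrightarrow> bary_adj a b" using h(3) unfolding bary_adj_def by blast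
    then show "K \<in> bary_cliques V" using h by (simp add: bary_cliques_def)
  qed
  have fc: "finite (chs V)" using assms by (rule finite_chs)
  have e0: "{} \<in> chs V" by (simp add: chs_def)
  have "real_of_int (euler_char V) = (\<Sum>K\<in>chs V - {{}}. (-1::real)^(card K - 1))"
    unfolding euler_char_def bc by simp
  also have "\<dots> = (\<Sum>K\<in>chs V - {{}}. - ((-1::real)^card K))"
  proof (rule sum.cong[OF refl])
    fix K assume K: "K \<in> chs V - {{}}"
    then have "K \<subseteq> V" "K \<noteq> {}" by (auto simp: chs_def)
    then have "finite K" "K \<noteq> {}" using assms finite_subset by blast+
    then have "card K > 0" by (simp add: card_gt_0_iff)
    then obtain n where n: "card K = Suc n" using gr0_implies_Suc by blast
    show "(-1::real)^(card K - 1) = - ((-1::real)^card K)"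
      unfolding n by simp
  qed
  also have "\<dots> = - (Phi V - 1)"
    unfolding Phi_def using fc e0 by (simp add: sum_negf sum_diff1)
  finally show ?thesis by simp
qed

lemma diag:
  assumes sc: "simplicial_complex G" and x: "x \<in> G"
  shows "gK G x x = Phi (unit_sphere G x)"
proof -
  have fG: "finite G" using sc unfolding simplicial_complex_def by blast
  have fin: "\<forall>z\<in>G. finite z \<and> z \<noteq> {}" using sc unfolding simplicial_complex_def by blast
  have cl: "\<forall>z\<in>G. \<forall>y. y \<subseteq> z \<and> y \<noteq> {} \<longrightarrow> y \<in> G"
    using sc unfolding simplicial_complex_def by blast
  have fx: "finite x" "x \<noteq> {}" using x fin by auto
  define Lo where "Lo = {y\<in>G. y \<subset> x}"
  define Up where "Up = {z\<in>G. x \<subset> z}"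
  have US: "unit_sphere G x = Lo \<union> Up" unfolding unit_sphere_def Lo_def Up_def by blast
  have PU: "Phi (Lo \<union> Up) = Phi Lo * Phi Up"
  proof (rule Phi_union)
    show "finite Lo" "finite Up" using fG by (simp_all add: Lo_def Up_def)
    show "Lo \<inter> Up = {}" unfolding Lo_def Up_def by auto
    show "\<forall>l\<in>Lo. \<forall>u\<in>Up. l \<subseteq> u" unfolding Lo_def Up_def by auto
  qed
  have PLo: "Phi Lo = 1 + (-1)^card ({}::'a set) * (\<Sum>z\<in>Lo. (-1::real)^card z)"
  proof (rule conv_chain)
    show "finite Lo" using fG by (simp add: Lo_def)
    show "finite ({}::'a set)" by simp
    show "\<forall>z\<in>Lo. {} \<subset> z \<and> finite z" using fin unfolding Lo_def by blast
    show "\<forall>z\<in>Lo. \<forall>w. {} \<subset> w \<and> w \<subseteq> z \<longrightarrow> w \<in> Lo"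
    proof (intro ballI allI impI)
      fix z w assume z: "z \<in> Lo" and w: "{} \<subset> w \<and> w \<subseteq> z"
      then have "w \<in> G" using cl unfolding Lo_def by blast
      then show "w \<in> Lo" using z w unfolding Lo_def by auto
    qed
  qed
  have LoE: "Lo = Pow x - {{}, x}"
  proof (intro equalityI subsetI)
    fix y assume "y \<in> Lo" then show "y \<in> Pow x - {{}, x}" using fin unfolding Lo_def by auto
  next
    fix y assume y: "y \<in> Pow x - {{}, x}"
    then have "y \<in> G" using cl x by blast
    then show "y \<in> Lo" using y unfolding Lo_def by auto
  qed
  have "(\<Sum>z\<in>Lo. (-1::real)^card z) = (\<Sum>z\<in>Pow x. (-1::real)^card z) - (\<Sum>z\<in>{{}, x}. (-1::real)^card z)"
    unfolding LoE using fx by (subst sum_diff) auto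
  also have "\<dots> = - 1 - (-1)^card x" using alt_pow[of x] fx by auto
  finally have SLo: "(\<Sum>z\<in>Lo. (-1::real)^card z) = - 1 - (-1)^card x" .
  have PUp: "Phi Up = 1 + (-1)^card x * (\<Sum>z\<in>Up. (-1::real)^card z)"
  proof (rule conv_chain)
    show "finite Up" using fG by (simp add: Up_def)
    show "finite x" by (rule fx(1))
    show "\<forall>z\<in>Up. x \<subset> z \<and> finite z" using fin unfolding Up_def by blast
    show "\<forall>z\<in>Up. \<forall>w. x \<subset> w \<and> w \<subseteq> z \<longrightarrow> w \<in> Up"
    proof (intro ballI allI impI)
      fix z w assume z: "z \<in> Up" and w: "x \<subset> w \<and> w \<subseteq> z"
      then have "w \<noteq> {}" "z \<in> G" using fx unfolding Up_def by auto
      then have "w \<in> G" using cl w by blast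
      then show "w \<in> Up" using w unfolding Up_def by auto
    qed
  qed
  have ins: "{z\<in>G. x \<union> x \<subseteq> z} = insert x Up" using x unfolding Up_def by auto
  have "gK G x x = - ((-1)^(card x + card x) * ((-1)^card x + (\<Sum>z\<in>Up. (-1::real)^card z)))"
    unfolding gK_def ins using fG by (simp add: Up_def)
  also have "\<dots> = - ((-1)^card x + (\<Sum>z\<in>Up. (-1::real)^card z))"
    by (simp flip: mult_2)
  finally have gx: "gK G x x = - ((-1)^card x + (\<Sum>z\<in>Up. (-1::real)^card z))" .
  have cc: "(-1::real)^card x * (-1)^card x = 1" by (simp flip: power_add)
  show ?thesis unfolding US PU PLo PUp gx SLo
    using cc by (simp add: algebra_simps)
qed

theorem mainTheorem9:
  fixes G :: "'a set set"
  assumes "simplicial_complex G"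
  shows "(\<exists>g. is_inverse_on G conn_matrix g) \<and>
         (\<forall>g. is_inverse_on G conn_matrix g \<longrightarrow>
              (\<forall>x\<in>G. g x x = 1 - real_of_int (euler_char (unit_sphere G x))))"
proof (intro conjI allI impI ballI)
  show "\<exists>g. is_inverse_on G conn_matrix g" using inv_gK[OF assms] by blast
next
  fix g x assume g: "is_inverse_on G conn_matrix g" and x: "x \<in> G"
  have fG: "finite G" using assms unfolding simplicial_complex_def by blast
  have "finite (unit_sphere G x)" using fG unfolding unit_sphere_def by simp
  then have e3: "real_of_int (euler_char (unit_sphere G x)) = 1 - Phi (unit_sphere G x)"
    by (rule euler_Phi)
  have e1: "g x x = gK G x x" by (rule uniq_gK[OF assms g x x])
  have e2: "gK G x x = Phi (unit_sphere G x)" by (rule diag[OF assms x])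
  show "g x x = 1 - real_of_int (euler_char (unit_sphere G x))"
    using e1 e2 e3 by linarith
qed

end
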